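(* Let $t\ge 2$, $m\ge 1$ and $k_1,\dots,k_t\ge 2$ be integers. If a finite simple graph $G$ contains an induced subgraph isomorphic to the vertex-disjoint union $P_{k_1}\cup\cdots\cup P_{k_t}\cup mP_1$ of paths on $k_1,\dots,k_t$ vertices and $m$ isolated vertices, then \[\mathrm{mur}(G)\ge \Big(\sum_{i=1}^t k_i\Big)-t.\]
   Context: For a finite simple undirected graph $G$ on vertices $v_1,\dots,v_n$, let $A_G$ be its $(0,1)$-adjacency matrix, $D_G=\mathrm{diag}(d_1,\dots,d_n)$ with $d_i$ the degree of $v_i$, $I$ the $n\times n$ identity matrix and $J$ the $n\times n$ all-ones matrix. A universal adjacency matrix of $G$ is any matrix $\alpha A_G+\beta I+\gamma J+\delta D_G$ with real scalars $\alpha,\beta,\gamma,\delta$ and $\alpha\neq 0$. The minimum universal rank $\mathrm{mur}(G)$ is the minimum rank over all universal adjacency matrices of $G$. *)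

theory Defs
  imports "HOL-Analysis.Analysis"
begin

definition simple_graph :: "('n::finite \<Rightarrow> 'n \<Rightarrow> bool) \<Rightarrow> bool" where
  "simple_graph E \<longleftrightarrow> (\<forall>u v. E u v \<longrightarrow> E v u) \<and> (\<forall>v. \<not> E v v)"

definition adj_matrix :: "('n::finite \<Rightarrow> 'n \<Rightarrow> bool) \<Rightarrow> real^'n^'n" where
  "adj_matrix E = (\<chi> i j. if E i j then 1 else 0)"

definition degree :: "('n::finite \<Rightarrow> 'n \<Rightarrow> bool) \<Rightarrow> 'n \<Rightarrow> nat" where
  "degree E v = card {w. E v w}"

definition deg_matrix :: "('n::finite \<Rightarrow> 'n \<Rightarrow> bool) \<Rightarrow> real^'n^'n" where
  "deg_matrix E = (\<chi> i j. if i = j then real (degree E i) else 0)"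

definition ones_matrix :: "real^'n^'n" where
  "ones_matrix = (\<chi> i j. 1)"

definition universal_adj :: "('n::finite \<Rightarrow> 'n \<Rightarrow> bool) \<Rightarrow> real \<Rightarrow> real \<Rightarrow> real \<Rightarrow> real \<Rightarrow> real^'n^'n" where
  "universal_adj E \<alpha> \<beta> \<gamma> \<delta> =
     \<alpha> *\<^sub>R adj_matrix E + \<beta> *\<^sub>R mat 1 + \<gamma> *\<^sub>R ones_matrix + \<delta> *\<^sub>R deg_matrix E"

definition mur :: "('n::finite \<Rightarrow> 'n \<Rightarrow> bool) \<Rightarrow> nat" where
  "mur E = Min {rank (universal_adj E \<alpha> \<beta> \<gamma> \<delta>) | \<alpha> \<beta> \<gamma> \<delta>. \<alpha> \<noteq> 0}"

text \<open>The graph P_{k_0} \<union> ... \<union> P_{k_{t-1}} \<union> m P_1: vertices Inl (i,j) with i<t, j<k i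
  (j-th vertex of the i-th path) and Inr l with l<m (isolated vertices).\<close>
definition paths_union_verts :: "nat \<Rightarrow> (nat \<Rightarrow> nat) \<Rightarrow> nat \<Rightarrow> ((nat \<times> nat) + nat) set" where
  "paths_union_verts t k m = {Inl (i, j) | i j. i < t \<and> j < k i} \<union> {Inr l | l. l < m}"

fun paths_union_adj :: "((nat \<times> nat) + nat) \<Rightarrow> ((nat \<times> nat) + nat) \<Rightarrow> bool" where
  "paths_union_adj (Inl (i, j)) (Inl (i', j')) = (i = i' \<and> (j' = j + 1 \<or> j = j' + 1))"
| "paths_union_adj _ _ = False"

definition has_induced_copy :: "('n \<Rightarrow> 'n \<Rightarrow> bool) \<Rightarrow> 'v set \<Rightarrow> ('v \<Rightarrow> 'v \<Rightarrow> bool) \<Rightarrow> bool" where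
  "has_induced_copy E V H \<longleftrightarrow>
     (\<exists>f. inj_on f V \<and> (\<forall>u\<in>V. \<forall>v\<in>V. E (f u) (f v) \<longleftrightarrow> H u v))"

end

theory Submission imports Defs begin
lemma rank_ge:
  fixes M :: "real^'n^'m" and D :: "'n set"
  assumes "\<And>x. (\<forall>i. i\<notin>D \<longrightarrow> x$i=0) \<Longrightarrow> M *v x = 0 \<Longrightarrow> x = 0"
  shows "card D \<le> rank M"
proof -
  define W where "W = {x::real^'n. \<forall>i. i \<notin> D \<longrightarrow> x$i = 0}"
  have dW0: "vec.dim W = card D" unfolding W_def by (rule dim_substandard_cart)
  have dW: "dim W = card D" using dW0 dim_vec_eq[of W] by simp
  have sW: "subspace W" unfolding W_def subspace_def by auto
  hence spW: "span W = W" by (simp add: span_eq_iff)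
  have lin: "linear ((*v) M)" by (simp add: matrix_vector_mul_linear)
  have inj: "inj_on ((*v) M) (span W)"
    unfolding spW
  proof (rule inj_onI)
    fix x y assume "x \<in> W" "y \<in> W" "M *v x = M *v y"
    hence "x - y = 0" using assms[of "x - y"] by (auto simp: W_def matrix_vector_mult_diff_distrib)
    thus "x = y" by simp
  qed
  have e: "dim ((*v) M ` W) = dim W" by (rule dim_image_eq[OF lin inj])
  have "dim ((*v) M ` W) \<le> dim (range ((*v) M))" by (rule dim_subset) auto
  thus ?thesis using e dW rank_dim_range[of M] by simp
qed

lemma entry: "universal_adj E \<alpha> \<beta> \<gamma> \<delta> $ r $ v = \<alpha> * (if E r v then 1 else 0) + \<beta> * (if r = v then 1 else 0) + \<gamma> + \<delta> * (if r = v then real (degree E r) else 0)"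
  by (simp add: universal_adj_def adj_matrix_def ones_matrix_def deg_matrix_def mat_def)

lemma kernel:
  fixes E :: "'n::finite \<Rightarrow> 'n \<Rightarrow> bool" and f :: "((nat \<times> nat) + nat) \<Rightarrow> 'n"
  assumes inj: "inj_on f (paths_union_verts t k m)"
    and adj: "\<forall>u\<in>paths_union_verts t k m. \<forall>v\<in>paths_union_verts t k m. E (f u) (f v) \<longleftrightarrow> paths_union_adj u v"
    and m: "m \<ge> 1" and a0: "\<alpha> \<noteq> 0"
    and fin: "finite (paths_union_verts t k m)"
    and supp: "\<forall>v. v \<notin> f ` {Inl (i, j) | i j. i < t \<and> 1 \<le> j \<and> j < k i} \<longrightarrow> x $ v = 0"
    and ker: "universal_adj E \<alpha> \<beta> \<gamma> \<delta> *v x = 0"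
  shows "x = 0"
proof -
  define V where "V = paths_union_verts t k m"
  define C :: "((nat \<times> nat) + nat) set" where "C = {Inl (i, j) | i j. i < t \<and> 1 \<le> j \<and> j < k i}"
  define M where "M = universal_adj E \<alpha> \<beta> \<gamma> \<delta>"
  define a where "a c = x $ f c" for c
  have CV: "C \<subseteq> V" by (auto simp: C_def V_def paths_union_verts_def)
  have finC: "finite C" using fin CV finite_subset V_def by blast
  have injC: "inj_on f C" using inj CV V_def inj_on_subset by blast
  have rowsum: "(M *v x) $ r = (\<Sum>c\<in>C. M $ r $ f c * a c)" for r
  proof -
    have "(M *v x) $ r = (\<Sum>v\<in>UNIV. M $ r $ v * x $ v)" by (simp add: matrix_vector_mult_def)
    also have "\<dots> = (\<Sum>v\<in>f ` C. M $ r $ v * x $ v)"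
      by (rule sum.mono_neutral_right) (use supp C_def in auto)
    also have "\<dots> = (\<Sum>c\<in>C. M $ r $ f c * a c)"
      by (simp add: sum.reindex[OF injC] a_def)
    finally show ?thesis .
  qed
  have Mx: "(\<Sum>c\<in>C. M $ r $ f c * a c) = 0" for r
    using ker rowsum[of r] by (simp add: M_def)
  define w :: "(nat \<times> nat) + nat" where "w = Inr 0"
  have wV: "w \<in> V" using m by (auto simp: w_def V_def paths_union_verts_def)
  have wrow: "M $ f w $ f c = \<gamma>" if "c \<in> C" for c
  proof -
    have "\<not> E (f w) (f c)" using adj wV CV that by (auto simp: V_def w_def)
    moreover have "w \<noteq> c" using that by (auto simp: w_def C_def)
    hence "f w \<noteq> f c" using inj wV CV that unfolding V_def inj_on_def by blast
    ultimately show ?thesis by (simp add: M_def entry)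
  qed
  have gsum: "\<gamma> * (\<Sum>c\<in>C. a c) = 0"
    using Mx[of "f w"] wrow by (simp add: sum_distrib_left)
  define N where "N r c = M $ r $ f c - \<gamma>" for r c
  have Nsum: "(\<Sum>c\<in>C. N r c * a c) = 0" for r
  proof -
    have "(\<Sum>c\<in>C. N r c * a c) = (\<Sum>c\<in>C. M $ r $ f c * a c) - \<gamma> * (\<Sum>c\<in>C. a c)"
      by (simp add: N_def algebra_simps sum_subtractf sum_distrib_left)
    thus ?thesis using Mx gsum by simp
  qed
  have main: "a (Inl (i, j)) = 0" if "i < t" "1 \<le> j" "j < k i" for i j
    using that
  proof (induction j rule: less_induct)
    case (less j)
    define r0 where "r0 = (Inl (i, j - 1) :: (nat \<times> nat) + nat)"
    have r0V: "r0 \<in> V" using less.prems by (auto simp: r0_def V_def paths_union_verts_def)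
    have jC: "Inl (i, j) \<in> C" using less.prems by (auto simp: C_def)
    have zero: "N (f r0) c * a c = 0" if cC: "c \<in> C - {Inl (i, j)}" for c
    proof -
      obtain i' j' where c: "c = Inl (i', j')" "i' < t" "1 \<le> j'" "j' < k i'" using cC by (auto simp: C_def)
      show ?thesis
      proof (cases "i' = i \<and> j' < j")
        case True
        then have "a c = 0" using less.IH[of j'] c by auto
        thus ?thesis by simp
      next
        case False
        have cr: "c \<noteq> r0" using False c less.prems by (auto simp: r0_def)
        have "f c \<noteq> f r0" using inj cr r0V CV cC by (auto simp: V_def inj_on_def)
        moreover have "E (f r0) (f c) = paths_union_adj r0 c" using adj r0V CV cC by (auto simp: V_def)
        moreover have "\<not> paths_union_adj r0 c" using False c less.prems cC by (auto simp: r0_def)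
        ultimately have "N (f r0) c = 0" by (simp add: N_def M_def entry)
        thus ?thesis by simp
      qed
    qed
    have "(\<Sum>c\<in>C. N (f r0) c * a c) = N (f r0) (Inl (i, j)) * a (Inl (i, j))"
      by (rule sum.remove[OF finC jC, THEN trans]) (simp add: sum.neutral zero)
    moreover have "N (f r0) (Inl (i, j)) = \<alpha>"
    proof -
      have ne: "Inl (i, j) \<noteq> r0" using less.prems by (auto simp: r0_def)
      have "f r0 \<noteq> f (Inl (i, j))" using inj ne r0V CV jC by (auto simp: V_def inj_on_def)
      moreover have "E (f r0) (f (Inl (i, j))) = paths_union_adj r0 (Inl (i, j))" using adj r0V CV jC by (auto simp: V_def)
      moreover have "paths_union_adj r0 (Inl (i, j))" using less.prems by (auto simp: r0_def)
      ultimately show ?thesis by (simp add: N_def M_def entry)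
    qed
    ultimately show ?case using Nsum[of "f r0"] a0 by simp
  qed
  show "x = 0"
  proof (subst vec_eq_iff, intro allI)
    fix v
    show "x $ v = 0 $ v"
    proof (cases "v \<in> f ` C")
      case True
      then obtain c where "c \<in> C" "v = f c" by auto
      then obtain i j where "c = Inl (i, j)" "i < t" "1 \<le> j" "j < k i" by (auto simp: C_def)
      thus ?thesis using main[of i j] \<open>v = f c\<close> by (simp add: a_def)
    next
      case False
      thus ?thesis using supp by (simp add: C_def)
    qed
  qed
qed

theorem lemma9:
  fixes E :: "'n::finite \<Rightarrow> 'n \<Rightarrow> bool"
    and t m :: nat and k :: "nat \<Rightarrow> nat"
  assumes "simple_graph E"
    and "t \<ge> 2" and "m \<ge> 1"
    and "\<forall>i<t. k i \<ge> 2"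
    and "has_induced_copy E (paths_union_verts t k m) paths_union_adj"
  shows "mur E \<ge> (\<Sum>i<t. k i) - t"
proof -
  obtain f where inj: "inj_on f (paths_union_verts t k m)"
    and adj: "\<forall>u\<in>paths_union_verts t k m. \<forall>v\<in>paths_union_verts t k m. E (f u) (f v) \<longleftrightarrow> paths_union_adj u v"
    using assms(5) unfolding has_induced_copy_def by blast
  have fin: "finite (paths_union_verts t k m)"
    using finite_imageD[OF _ inj] by simp
  define C :: "((nat \<times> nat) + nat) set" where "C = {Inl (i, j) | i j. i < t \<and> 1 \<le> j \<and> j < k i}"
  have CV: "C \<subseteq> paths_union_verts t k m" by (auto simp: C_def paths_union_verts_def)
  have injC: "inj_on f C" using inj CV inj_on_subset by blast
  have Ceq: "C = (\<lambda>p. Inl p) ` (SIGMA i:{..<t}. {1..<k i})" by (auto simp: C_def)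
  have "card C = card (SIGMA i:{..<t}. {1..<k i})"
    unfolding Ceq by (rule card_image) (simp add: inj_on_def)
  also have "\<dots> = (\<Sum>i<t. k i - 1)" by (simp add: card_SigmaI)
  finally have cC: "card C = (\<Sum>i<t. k i - 1)" .
  have "(\<Sum>i<t. k i - 1) + t = (\<Sum>i<t. (k i - 1) + 1)" by (simp only: sum.distrib) simp
  also have "\<dots> = (\<Sum>i<t. k i)" using assms(4) by (intro sum.cong) auto
  finally have cC2: "card C = (\<Sum>i<t. k i) - t" using cC by simp
  have bound: "(\<Sum>i<t. k i) - t \<le> rank (universal_adj E \<alpha> \<beta> \<gamma> \<delta>)" if "\<alpha> \<noteq> 0" for \<alpha> \<beta> \<gamma> \<delta>
  proof -
    have "card (f ` C) \<le> rank (universal_adj E \<alpha> \<beta> \<gamma> \<delta>)"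
    proof (rule rank_ge)
      fix x :: "real^'n"
      assume "\<forall>i. i \<notin> f ` C \<longrightarrow> x $ i = 0" "universal_adj E \<alpha> \<beta> \<gamma> \<delta> *v x = 0"
      thus "x = 0" using kernel[OF inj adj assms(3) that fin] by (simp add: C_def)
    qed
    thus ?thesis using card_image[OF injC] cC2 by simp
  qed
  define S where "S = {rank (universal_adj E \<alpha> \<beta> \<gamma> \<delta>) | \<alpha> \<beta> \<gamma> \<delta>. \<alpha> \<noteq> 0}"
  have "S \<subseteq> {..CARD('n)}" using rank_bound by (force simp: S_def)
  hence finS: "finite S" using finite_subset by blast
  have "rank (universal_adj E 1 0 0 0) \<in> S" unfolding S_def by force
  hence neS: "S \<noteq> {}" by blast
  have "(\<Sum>i<t. k i) - t \<le> Min S" using finS neS bound by (auto simp: S_def Min_ge_iff)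
  thus ?thesis by (simp add: mur_def S_def)
qed

end
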